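(* Assume $\mathcal A$ is closed and star shaped, $\mathcal P$ is closed and star shaped, and $V_0$ is lower semicontinuous and star shaped. Then for every scalable acceptable deal $x\in\mathbb R^N$ and every $\lambda>0$ we have $\lambda x\in\mathcal P$, $V_0(\lambda x)\le0$ and $\lambda V_1(x)\in\mathcal A$. In particular, every scalable acceptable deal is an acceptable deal.
   Context: Standing setup: Let $\mathcal{X}$ be a real topological vector space partially ordered by a convex cone $\mathcal{X}_+\subset\mathcal X$; write $X\ge Y$ iff $X-Y\in\mathcal X_+$. Fix $N\in\mathbb N$ and: a set $\mathcal P\subset\mathbb R^N$ with $0\in\mathcal P$; a function $V_0:\mathbb R^N\to\mathbb R$ with $V_0(0)=0$ and $V_0(x)\ge -V_0(-x)$ for all $x\in\mathbb R^N$; a map $V_1:\mathbb R^N\to\mathcal X$ with $V_1(0)=0$ and $V_1(x)\le -V_1(-x)$ for all $x\in\mathbb R^N$; a set $\mathcal A\subset\mathcal X$ with $0\in\mathcal A$ and $\mathcal A+\mathcal X_+\subset\mathcal A$. A set $C$ is star shaped if $\lambda C\subset C$ for all $\lambda\in[0,1]$; a function $f$ is star shaped if $f(\lambda x)\le\lambda f(x)$ for all $\lambda\in[0,1]$. Asymptotic notions: for a nonempty set $C$ in a topological vector space, $C^\infty=\{X:\exists\text{ nets }(X_\alpha)\subset C,\ (\lambda_\alpha)\subset[0,\infty),\ \lambda_\alpha\to0,\ \lambda_\alpha X_\alpha\to X\}$. For $f:\mathbb R^N\to\mathbb R$, its asymptotic function $f^\infty:\mathbb R^N\to[-\infty,\infty]$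 is the function whose epigraph $\{(x,m)\in\mathbb R^N\times\mathbb R: f^\infty(x)\le m\}$ equals $(\operatorname{epi}f)^\infty$, where $\operatorname{epi}f=\{(x,m)\in\mathbb R^N\times\mathbb R: f(x)\le m\}$. A portfolio $x\in\mathbb R^N$ is an acceptable deal if $x\in\mathcal P$, $V_0(x)\le0$ and $V_1(x)\in\mathcal A\setminus\{0\}$; it is a scalable acceptable deal if $x\in\mathcal P^\infty$, $V_0^\infty(x)\le0$ and $V_1(x)\in\mathcal A^\infty\setminus\{0\}$. *)

theory Defs
  imports "HOL-Analysis.Analysis"
begin

definition star_shaped_set :: "'a::real_vector set \<Rightarrow> bool" where
  "star_shaped_set C \<longleftrightarrow> (\<forall>l::real. 0 \<le> l \<and> l \<le> 1 \<longrightarrow> (\<lambda>x. l *\<^sub>R x) ` C \<subseteq> C)"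

definition star_shaped_fun :: "('a::real_vector \<Rightarrow> real) \<Rightarrow> bool" where
  "star_shaped_fun f \<longleftrightarrow> (\<forall>l::real. \<forall>x. 0 \<le> l \<and> l \<le> 1 \<longrightarrow> f (l *\<^sub>R x) \<le> l * f x)"

definition lsc :: "('a::topological_space \<Rightarrow> real) \<Rightarrow> bool" where
  "lsc f \<longleftrightarrow> (\<forall>c. closed {x. f x \<le> c})"

text \<open>Asymptotic cone. Nets are represented by (proper) filters: a net
  \<open>(X_\<alpha>, \<lambda>_\<alpha>)\<close> corresponds to the image of its tail filter on pairs.\<close>
definition asym_cone :: "'a::{real_vector,topological_space} set \<Rightarrow> 'a set" where
  "asym_cone C = {X. \<exists>F :: ('a \<times> real) filter. F \<noteq> bot \<and>
      eventually (\<lambda>p. fst p \<in> C \<and> 0 \<le> snd p) F \<and>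
      ((\<lambda>p. snd p) \<longlongrightarrow> 0) F \<and>
      ((\<lambda>p. snd p *\<^sub>R fst p) \<longlongrightarrow> X) F}"

definition epi :: "('a \<Rightarrow> real) \<Rightarrow> ('a \<times> real) set" where
  "epi f = {(x, m). f x \<le> m}"

definition asym_fun :: "('a::{real_vector,topological_space} \<Rightarrow> real) \<Rightarrow> 'a \<Rightarrow> ereal" where
  "asym_fun f x = Inf {ereal m | m. (x, m) \<in> asym_cone (epi f)}"

definition acceptable_deal ::
  "(real^'n) set \<Rightarrow> (real^'n \<Rightarrow> real) \<Rightarrow> (real^'n \<Rightarrow> 'x::real_vector)
     \<Rightarrow> 'x set \<Rightarrow> real^'n \<Rightarrow> bool" where
  "acceptable_deal P V0 V1 A x \<longleftrightarrow> x \<in> P \<and> V0 x \<le> 0 \<and> V1 x \<in> A - {0}"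

definition scalable_acceptable_deal ::
  "(real^'n) set \<Rightarrow> (real^'n \<Rightarrow> real) \<Rightarrow> (real^'n \<Rightarrow> 'x::{real_vector,topological_space})
     \<Rightarrow> 'x set \<Rightarrow> real^'n \<Rightarrow> bool" where
  "scalable_acceptable_deal P V0 V1 A x \<longleftrightarrow>
     x \<in> asym_cone P \<and> asym_fun V0 x \<le> 0 \<and> V1 x \<in> asym_cone A - {0}"

end

theory Submission
  imports Defs
begin


lemma asym_in:
  fixes C :: "'a::{real_vector,topological_space} set"
  assumes sc: "continuous_on UNIV (\<lambda>p::real \<times> 'a. fst p *\<^sub>R snd p)"
    and cl: "closed C" and st: "star_shaped_set C"
    and X: "X \<in> asym_cone C" and t: "t > 0"
  shows "t *\<^sub>R X \<in> C"
proof -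
  from X obtain F :: "('a \<times> real) filter" where F: "F \<noteq> bot"
    "eventually (\<lambda>p. fst p \<in> C \<and> 0 \<le> snd p) F"
    "((\<lambda>p. snd p) \<longlongrightarrow> 0) F" "((\<lambda>p. snd p *\<^sub>R fst p) \<longlongrightarrow> X) F"
    unfolding asym_cone_def by blast
  have ev1: "eventually (\<lambda>p. snd p < 1 / t) F"
    using order_tendstoD(2)[OF F(3), of "1/t"] t by simp
  have lim: "((\<lambda>p. (t, snd p *\<^sub>R fst p)) \<longlongrightarrow> (t, X)) F"
    by (intro tendsto_Pair tendsto_const F(4))
  have lim2: "((\<lambda>p. (t * snd p) *\<^sub>R fst p) \<longlongrightarrow> t *\<^sub>R X) F"
    using continuous_on_tendsto_compose[OF sc lim] by (simp add: o_def)
  have "eventually (\<lambda>p. (t * snd p) *\<^sub>R fst p \<in> C) F"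
    using ev1 F(2)
  proof eventually_elim
    case (elim p)
    have "0 \<le> t * snd p" "t * snd p \<le> 1" using elim t
      by (simp_all add: field_simps)
    thus ?case using st elim unfolding star_shaped_set_def by blast
  qed
  thus ?thesis using Lim_in_closed_set[OF cl _ F(1) lim2] by blast
qed

lemma epi_closed:
  fixes f :: "'a::topological_space \<Rightarrow> real"
  assumes "lsc f"
  shows "closed (epi f)"
proof -
  have "open (- epi f)"
  proof (rule open_prod_intro)
    fix z assume "z \<in> - epi f"
    then obtain x m where z: "z = (x, m)" "f x > m" by (cases z) (auto simp: epi_def)
    define c where "c = (m + f x) / 2"
    have "open (- {y. f y \<le> c})" using assms unfolding lsc_def by auto
    moreover have "open {..<c}" by simp
    moreover have "z \<in> (- {y. f y \<le> c}) \<times> {..<c}" using z by (auto simp: c_def)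
    moreover have "(- {y. f y \<le> c}) \<times> {..<c} \<subseteq> - epi f" by (auto simp: epi_def)
    ultimately show "\<exists>A B. open A \<and> open B \<and> z \<in> A \<times> B \<and> A \<times> B \<subseteq> - epi f" by blast
  qed
  thus ?thesis by (simp add: closed_def)
qed

lemma epi_star:
  assumes "star_shaped_fun f"
  shows "star_shaped_set (epi f)"
  unfolding star_shaped_set_def epi_def
proof (intro allI impI subsetI)
  fix l :: real and z assume l: "0 \<le> l \<and> l \<le> 1"
    and "z \<in> (\<lambda>x. l *\<^sub>R x) ` {(x, m). f x \<le> m}"
  then obtain x m where z: "z = (l *\<^sub>R x, l * m)" "f x \<le> m" by (auto simp: image_iff)
  have "f (l *\<^sub>R x) \<le> l * f x" using assms l unfolding star_shaped_fun_def by blast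
  also have "\<dots> \<le> l * m" using z l by (simp add: mult_left_mono)
  finally show "z \<in> {(x, m). f x \<le> m}" using z by simp
qed

lemma V0_part:
  fixes V0 :: "'a::real_normed_vector \<Rightarrow> real"
  assumes lsc: "lsc V0" and st: "star_shaped_fun V0"
    and a: "asym_fun V0 x \<le> 0" and t: "t > 0"
  shows "V0 (t *\<^sub>R x) \<le> 0"
proof (rule field_le_epsilon)
  fix e :: real assume e: "e > 0"
  have "Inf {ereal m | m. (x, m) \<in> asym_cone (epi V0)} < ereal (e / t)"
    using a e t unfolding asym_fun_def by (simp add: le_less_trans)
  then obtain y where "y \<in> {ereal m | m. (x, m) \<in> asym_cone (epi V0)}" "y < ereal (e/t)"
    using Inf_less_iff by blast
  then obtain m where m: "(x, m) \<in> asym_cone (epi V0)" "m < e / t" by auto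
  have sc: "continuous_on UNIV (\<lambda>p::real \<times> ('a \<times> real). fst p *\<^sub>R snd p)"
    by (intro continuous_intros)
  have "t *\<^sub>R (x, m) \<in> epi V0"
    by (rule asym_in[OF sc epi_closed[OF lsc] epi_star[OF st] m(1) t])
  hence "V0 (t *\<^sub>R x) \<le> t * m" by (simp add: epi_def)
  also have "\<dots> \<le> e" using m t by (simp add: field_simps)
  finally show "V0 (t *\<^sub>R x) \<le> 0 + e" by simp
qed

theorem mainTheorem6:
  fixes Xplus :: "'x::{real_vector,topological_space} set"
    and P :: "(real^'n) set"
    and V0 :: "real^'n \<Rightarrow> real"
    and V1 :: "real^'n \<Rightarrow> 'x"
    and A :: "'x set"
  assumes tvs_add: "continuous_on UNIV (\<lambda>p::'x \<times> 'x. fst p + snd p)"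
    and tvs_scale: "continuous_on UNIV (\<lambda>p::real \<times> 'x. fst p *\<^sub>R snd p)"
    and cone: "convex_cone Xplus"
    and P0: "0 \<in> P"
    and V0_0: "V0 0 = 0"
    and V0_sym: "\<And>x. V0 x \<ge> - V0 (- x)"
    and V1_0: "V1 0 = 0"
    and V1_sym: "\<And>x. (- V1 (- x)) - V1 x \<in> Xplus"
    and A0: "0 \<in> A"
    and A_mono: "\<And>a c. a \<in> A \<Longrightarrow> c \<in> Xplus \<Longrightarrow> a + c \<in> A"
    and A_closed: "closed A" and A_star: "star_shaped_set A"
    and P_closed: "closed P" and P_star: "star_shaped_set P"
    and V0_lsc: "lsc V0" and V0_star: "star_shaped_fun V0"
  shows "\<forall>x. scalable_acceptable_deal P V0 V1 A x \<longrightarrow>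
           (\<forall>l::real. l > 0 \<longrightarrow> l *\<^sub>R x \<in> P \<and> V0 (l *\<^sub>R x) \<le> 0 \<and> l *\<^sub>R V1 x \<in> A)
           \<and> acceptable_deal P V0 V1 A x"
proof (intro allI impI)
  fix x assume sd: "scalable_acceptable_deal P V0 V1 A x"
  have sP: "continuous_on UNIV (\<lambda>p::real \<times> (real^'n). fst p *\<^sub>R snd p)"
    by (intro continuous_intros)
  have main: "\<forall>l::real. l > 0 \<longrightarrow> l *\<^sub>R x \<in> P \<and> V0 (l *\<^sub>R x) \<le> 0 \<and> l *\<^sub>R V1 x \<in> A"
  proof (intro allI impI conjI)
    fix l :: real assume l: "l > 0"
    show "l *\<^sub>R x \<in> P"
      using asym_in[OF sP P_closed P_star _ l] sd unfolding scalable_acceptable_deal_def by blast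
    show "V0 (l *\<^sub>R x) \<le> 0"
      using V0_part[OF V0_lsc V0_star _ l] sd unfolding scalable_acceptable_deal_def by blast
    show "l *\<^sub>R V1 x \<in> A"
      using asym_in[OF tvs_scale A_closed A_star _ l] sd unfolding scalable_acceptable_deal_def by blast
  qed
  moreover have "acceptable_deal P V0 V1 A x"
    using main[rule_format, of 1] sd
    unfolding acceptable_deal_def scalable_acceptable_deal_def by simp
  ultimately show "(\<forall>l::real. l > 0 \<longrightarrow> l *\<^sub>R x \<in> P \<and> V0 (l *\<^sub>R x) \<le> 0 \<and> l *\<^sub>R V1 x \<in> A)
           \<and> acceptable_deal P V0 V1 A x" by blast
qed

end
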